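(* Let $r,s\ge0$, and let $b_i=\prod_{\mathcal F}b_i^{(n)}$ ($1\le i\le r$) and $c_j=\prod_{\mathcal F}c_j^{(n)}$ ($1\le j\le s$) be complex numbers written as ultraproducts of elements $b_i^{(n)},c_j^{(n)}\in\Bbbk$. Then for every central character $\psi$ of $U(\mathfrak{gl}_t)$ there exist central characters $\psi^{(n)}$ of $U(\mathfrak{gl}_n(\Bbbk))$ with $\psi=\prod_{\mathcal F}\psi^{(n)}$ such that $\psi^{(n)}(C_k)=0$ for all $k\ge1$ when $n\le r+s$, and such that for every $n>r+s$, $\psi^{(n)}$ is the central character by which $Z(U(\mathfrak{gl}_n(\Bbbk)))$ acts on some Verma module $M_{\mu^{(n)}}$ with $$\mu^{(n)}_i=b_i^{(n)}\ (1\le i\le r),\qquad \mu^{(n)}_{n-j+1}=c_j^{(n)}\ (1\le j\le s).$$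
   Context: $\Bbbk=\overline{\mathbb Q}$; $\mathcal F$ is a fixed nonprincipal ultrafilter on $\mathbb N$ with a fixed field isomorphism $\prod_{\mathcal F}\Bbbk\simeq\mathbb C$, and $t$ is the image of $\prod_{\mathcal F}n$. For $\mathfrak{gl}_n(\Bbbk)$, $M_\lambda=U(\mathfrak{gl}_n)\otimes_{U(\mathfrak b)}\Bbbk_{\lambda-\rho}$ ($\mathfrak b$ upper triangular Borel, $\rho$ half-sum of positive roots), and $C_k\in Z(U(\mathfrak{gl}_n(\Bbbk)))$ ($k\ge1$) is the central element acting on every $M_\lambda$ by $\sum_i\lambda_i^k$. In $U(\mathfrak{gl}_t)$ (the universal enveloping algebra of $\mathfrak{gl}_t=V\otimes V^*$ in Deligne's category $\operatorname{Rep}(GL_t)$, realized as an ultraproduct of the $U(\mathfrak{gl}_n(\Bbbk))$), $C_k=\prod_{\mathcal F}C_k$ and $Z(U(\mathfrak{gl}_t))=\mathbb C[C_1,C_2,\ldots]$, so a central character $\psi$ is the same as an arbitrary sequence $\psi_k=\psi(C_k)\in\mathbb C$. For central characters $\psi^{(n)}$ of $\mathfrak{gl}_n(\Bbbk)$, $\psi=\prod_{\mathcal F}\psi^{(n)}$ means $\psi(C_k)=\prod_{\mathcal F}\psi^{(n)}(C_k)$ for all $k\ge1$. *)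

theory Defs
  imports "HOL-Computational_Algebra.Polynomial"
begin

text \<open>The field k = algebraic closure of Q, modelled as the algebraic complex numbers.\<close>
definition kbar :: "complex set" where
  "kbar = {z. algebraic z}"

definition kseqs :: "(nat \<Rightarrow> complex) set" where
  "kseqs = {x. \<forall>n. x n \<in> kbar}"

definition nonprincipal_ultrafilter :: "nat filter \<Rightarrow> bool" where
  "nonprincipal_ultrafilter F \<longleftrightarrow> F \<noteq> bot \<and>
     (\<forall>P. eventually P F \<or> eventually (\<lambda>n. \<not> P n) F) \<and>
     (\<forall>m. eventually (\<lambda>n. n \<noteq> m) F)"

text \<open>theta is (induced by) a field isomorphism from the ultraproduct of copies of k
  along F onto the complex numbers: a ring homomorphism on k-valued sequences,
  surjective onto C, whose fibres are exactly the F-equivalence classes.\<close>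
definition ultraproduct_iso :: "nat filter \<Rightarrow> ((nat \<Rightarrow> complex) \<Rightarrow> complex) \<Rightarrow> bool" where
  "ultraproduct_iso F \<theta> \<longleftrightarrow> nonprincipal_ultrafilter F \<and>
     (\<forall>x\<in>kseqs. \<forall>y\<in>kseqs. \<theta> (\<lambda>n. x n + y n) = \<theta> x + \<theta> y) \<and>
     (\<forall>x\<in>kseqs. \<forall>y\<in>kseqs. \<theta> (\<lambda>n. x n * y n) = \<theta> x * \<theta> y) \<and>
     \<theta> (\<lambda>n. 1) = 1 \<and>
     (\<forall>x\<in>kseqs. \<forall>y\<in>kseqs. \<theta> x = \<theta> y \<longleftrightarrow> eventually (\<lambda>n. x n = y n) F) \<and>
     (\<forall>z. \<exists>x\<in>kseqs. \<theta> x = z)"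

text \<open>Central character of the Verma module M_mu of gl_n(k), recorded via its values on
  the generators C_k (k \<ge> 1): C_k acts by sum_i mu_i^k.\<close>
definition verma_cc :: "nat \<Rightarrow> (nat \<Rightarrow> complex) \<Rightarrow> nat \<Rightarrow> complex" where
  "verma_cc n \<mu> k = (\<Sum>i=1..n. \<mu> i ^ k)"

text \<open>A central character of gl_n(k), recorded via its values chi k = chi(C_k), k \<ge> 1
  (these determine it, as Z(U(gl_n)) is generated by the C_k); by Harish-Chandra every
  central character is that of some Verma module M_lambda with lambda in k^n.\<close>
definition central_char_gl :: "nat \<Rightarrow> (nat \<Rightarrow> complex) \<Rightarrow> bool" where
  "central_char_gl n \<chi> \<longleftrightarrow>
     (\<exists>la. (\<forall>i\<in>{1..n}. la i \<in> kbar) \<and> (\<forall>k\<ge>1. \<chi> k = verma_cc n la k))"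

end

theory Submission
  imports Defs "HOL-Algebra.Algebraic_Closure_Type"
begin

abbreviation CR :: "complex ring" where "CR \<equiv> ring_of_type_algebra"

lemma CR_simps[simp]: "carrier CR = UNIV" "mult CR = (*)" "add CR = (+)" "zero CR = 0" "one CR = 1"
  by (auto simp: ring_of_type_algebra_def)

lemma CRF: "field CR" by (rule field_from_type_algebra)

lemma CR_pow[simp]: "x [^]\<^bsub>CR\<^esub> (n::nat) = x ^ n"
  by (induction n) auto

lemma CR_neg[simp]: "\<ominus>\<^bsub>CR\<^esub> x = - x"
  proof - interpret field CR by (rule CRF) show ?thesis by (rule minus_equality) auto qed

lemma CR_inv[simp]: "inv\<^bsub>CR\<^esub> x = inverse x" if "x \<noteq> 0"
  proof - interpret field CR by (rule CRF) show ?thesis using that by (intro comm_inv_char) auto qed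

lemma Rats_subfield: "subfield \<rat> CR"
proof - interpret field CR by (rule CRF) show ?thesis by (rule subfieldI'[OF subringI]) auto qed

lemma CR_eval: "ring.eval CR p x = poly (Poly (rev p)) x"
proof - interpret field CR by (rule CRF) show ?thesis
proof (induction p)
  case Nil thus ?case by simp
next
  case (Cons a p)
  have "ring.eval CR (a # p) x = a * x ^ length p + ring.eval CR p x" by simp
  thus ?case using Cons by (simp add: Poly_append poly_monom algebra_simps)
qed
qed

lemma alg_to_CR: assumes "algebraic x" shows "(ring.algebraic CR \<rat>) x"
proof - interpret field CR by (rule CRF)
  obtain p where p: "\<And>i. Polynomial.coeff p i \<in> \<rat>" "p \<noteq> 0" "Polynomial.poly p x = 0"
    using assms algebraic_altdef by blast
  let ?L = "rev (coeffs p)"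
  have "?L \<in> carrier (\<rat>[X]\<^bsub>CR\<^esub>)"
    unfolding univ_poly_carrier[symmetric] polynomial_def
    using p by (auto simp: hd_rev last_coeffs_eq_coeff_degree coeffs_def)
  moreover have "?L \<noteq> []" using p by simp
  moreover have "ring.eval CR ?L x = \<zero>\<^bsub>CR\<^esub>" using p by (simp add: CR_eval)
  ultimately show ?thesis using algebraicI[of ?L \<rat> x] by (simp add: over_def)
qed

lemma CR_to_alg: assumes "(ring.algebraic CR \<rat>) x" shows "algebraic x"
proof - interpret field CR by (rule CRF)
  have ao: "(algebraic over \<rat>) x" using assms by (simp add: over_def)
  have xc: "x \<in> carrier CR" by simp
  obtain L where L: "L \<in> carrier (\<rat>[X]\<^bsub>CR\<^esub>)" "L \<noteq> []" "ring.eval CR L x = \<zero>\<^bsub>CR\<^esub>"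
    using algebraicE[OF subfieldE(1)[OF Rats_subfield] xc ao] by blast
  have pl: "set L \<subseteq> \<rat>" "hd L \<noteq> 0"
    using L(1,2) unfolding univ_poly_carrier[symmetric] polynomial_def by auto
  let ?q = "Poly (rev L)"
  have "\<forall>i. Polynomial.coeff ?q i \<in> \<rat>"
    using pl nth_mem[of _ "rev L"] by (auto simp: nth_default_def)
  moreover have "?q \<noteq> 0"
  proof
    assume "?q = 0"
    then obtain n where "rev L = replicate n 0" by (auto simp: Poly_eq_0)
    hence "set (rev L) \<subseteq> {0}" by auto hence "set L \<subseteq> {0}" by simp
    thus False using pl L(2) by (cases L) auto
  qed
  moreover have "Polynomial.poly ?q x = 0" using L(3) by (simp add: CR_eval)
  ultimately show ?thesis using algebraic_altdef by blast
qed


lemma alg_add: "algebraic x \<Longrightarrow> algebraic y \<Longrightarrow> algebraic (x + y :: complex)"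
proof -
  assume x: "algebraic x" and y: "algebraic y"
  interpret field CR by (rule CRF)
  have S: "subfield {x \<in> carrier CR. (algebraic over \<rat>) x} CR"
    by (rule subfield_of_algebraics[OF Rats_subfield])
  have "x \<oplus>\<^bsub>CR\<^esub> y \<in> {x \<in> carrier CR. (algebraic over \<rat>) x}"
    using subringE(7)[OF subfieldE(1)[OF S]] alg_to_CR[OF x] alg_to_CR[OF y] by (simp add: over_def)
  thus ?thesis using CR_to_alg by (simp add: over_def)
qed

lemma alg_mult: "algebraic x \<Longrightarrow> algebraic y \<Longrightarrow> algebraic (x * y :: complex)"
proof -
  assume x: "algebraic x" and y: "algebraic y"
  interpret field CR by (rule CRF)
  have S: "subfield {x \<in> carrier CR. (algebraic over \<rat>) x} CR"
    by (rule subfield_of_algebraics[OF Rats_subfield])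
  have "x \<otimes>\<^bsub>CR\<^esub> y \<in> {x \<in> carrier CR. (algebraic over \<rat>) x}"
    using subringE(6)[OF subfieldE(1)[OF S]] alg_to_CR[OF x] alg_to_CR[OF y] by (simp add: over_def)
  thus ?thesis using CR_to_alg by (simp add: over_def)
qed

lemma alg_power: "algebraic x \<Longrightarrow> algebraic (x ^ n :: complex)"
  by (induction n) (auto intro: alg_mult)

lemma alg_sum: "(\<And>i. i \<in> A \<Longrightarrow> algebraic (f i)) \<Longrightarrow> algebraic (\<Sum>i\<in>A. f i :: complex)"
  by (induction A rule: infinite_finite_induct) (auto intro: alg_add)

lemma alg_sum_list: "(\<And>z. z \<in> set L \<Longrightarrow> algebraic (f z)) \<Longrightarrow> algebraic (sum_list (map f L) :: complex)"
  by (induction L) (auto intro: alg_add)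

lemma alg_of_nat: "algebraic (of_nat n :: complex)"
  by (rule rat_imp_algebraic) simp

lemma alg_root: assumes "j > 0" "algebraic ((z::complex) ^ j)" shows "algebraic z"
proof -
  obtain p where p: "\<And>i. Polynomial.coeff p i \<in> \<rat>" "p \<noteq> 0" "Polynomial.poly p (z ^ j) = 0"
    using assms(2) algebraic_altdef by blast
  let ?q = "pcompose p (Polynomial.monom 1 j)"
  have "\<And>i. Polynomial.coeff ?q i \<in> \<rat>"
    by (rule coeff_pcompose_semiring_closed) (auto simp: p coeff_monom)
  moreover have "?q \<noteq> 0"
    using pcompose_eq_0[of p "Polynomial.monom 1 j"] p(2) assms(1) by (auto simp: degree_monom_eq)
  moreover have "Polynomial.poly ?q z = 0" using p(3) by (simp add: poly_pcompose poly_monom)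
  ultimately show ?thesis using algebraic_altdef by blast
qed


definition psl :: "complex list \<Rightarrow> nat \<Rightarrow> complex" where
  "psl L k = sum_list (map (\<lambda>z. z ^ k) L)"

lemma psl_append[simp]: "psl (L @ M) k = psl L k + psl M k"
  by (simp add: psl_def)

definition groot :: "nat \<Rightarrow> complex \<Rightarrow> complex" where
  "groot j a = (SOME w. w ^ j = a)"

lemma groot: assumes "j > 0" shows "groot j a ^ j = a"
proof -
  have "\<exists>w. w ^ j = a"
  proof (cases "a = 0")
    case True thus ?thesis using assms by (intro exI[of _ 0]) auto
  next
    case False
    define c' where "c' = root j (norm a) * cis (Arg a / j)"
    have "(\<lambda>z. c' * z) ` {z. z ^ j = 1} = {z. z ^ j = a}"
      using bij_betw_imp_surj_on[OF bij_betw_nth_root_unity[OF False assms]] by (simp add: c'_def)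
    moreover have "c' * 1 \<in> (\<lambda>z. c' * z) ` {z. z ^ j = 1}" by (rule imageI) simp
    ultimately have "(c' * 1) ^ j = a" by (metis (mono_tags, lifting) mem_Collect_eq)
    thus ?thesis by (rule exI)
  qed
  thus ?thesis unfolding groot_def by (rule someI_ex)
qed

definition gadget :: "nat \<Rightarrow> complex \<Rightarrow> complex list" where
  "gadget j a = map (\<lambda>l. groot j (a / of_nat j) * cis (2 * pi / j) ^ l) [0..<j]"

lemma length_gadget[simp]: "length (gadget j a) = j"
  by (simp add: gadget_def)

lemma gadget_alg: assumes "algebraic a" "z \<in> set (gadget j a)" shows "algebraic z"
proof -
  have "z \<in> (\<lambda>l. groot j (a / of_nat j) * cis (2 * pi / j) ^ l) ` {0..<j}"
    using assms(2) unfolding gadget_def set_map set_upt .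
  then obtain l where z: "z = groot j (a / of_nat j) * cis (2 * pi / j) ^ l" and "l \<in> {0..<j}"
    by (rule imageE)
  hence j: "j > 0" by (simp only: atLeastLessThan_iff) linarith
  have "z ^ j = (groot j (a / of_nat j) ^ j) * (cis (2 * pi / j) ^ l) ^ j"
    unfolding z by (rule power_mult_distrib)
  also have "(cis (2 * pi / j) ^ l) ^ j = (cis (2 * pi / j) ^ j) ^ l"
    by (simp only: power_mult[symmetric] mult.commute)
  also have "cis (2 * pi / j) ^ j = 1" using j by (simp add: DeMoivre)
  also have "groot j (a / of_nat j) ^ j = a / of_nat j" using groot[OF j] .
  finally have "z ^ j = a / of_nat j" by simp
  moreover have "algebraic (a / of_nat j)"
    unfolding divide_inverse by (intro alg_mult assms(1) algebraic_inverse alg_of_nat)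
  ultimately have "algebraic (z ^ j)" by (simp only:)
  thus ?thesis by (rule alg_root[OF j])
qed

lemma root_unity_ne1: fixes k j :: nat assumes "0 < k" "k < j" shows "cis (2 * pi / j) ^ k \<noteq> 1"
proof
  assume "cis (2 * pi / j) ^ k = 1"
  hence "cis (2 * pi * real k / real j) = cis (2 * pi * real 0 / real j)"
    by (simp add: DeMoivre mult.commute)
  moreover have "inj_on (\<lambda>k. cis (2 * pi * real k / real j)) {..<j}"
    using bij_betw_roots_unity[of j] assms by (simp add: bij_betw_def)
  ultimately have "k = 0" using assms inj_onD[of "\<lambda>k. cis (2 * pi * real k / real j)" "{..<j}" k 0] by simp
  thus False using assms by simp
qed

lemma psl_gadget: assumes "1 \<le> k" "k \<le> j" shows "psl (gadget j a) k = (if k = j then a else 0)"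
proof -
  define w where "w = groot j (a / of_nat j)"
  define \<omega> where "\<omega> = cis (2 * pi / j)"
  have "psl (gadget j a) k = (\<Sum>l<j. (w * \<omega> ^ l) ^ k)"
    unfolding psl_def gadget_def w_def \<omega>_def map_map o_def
    by (simp add: lessThan_atLeast0 flip: sum_set_upt_conv_sum_list_nat)
  also have "\<dots> = w ^ k * (\<Sum>l<j. (\<omega> ^ k) ^ l)"
    unfolding sum_distrib_left by (rule sum.cong) (simp_all only: power_mult_distrib power_mult[symmetric] mult.commute)
  finally have eq: "psl (gadget j a) k = w ^ k * (\<Sum>l<j. (\<omega> ^ k) ^ l)" .
  show ?thesis
  proof (cases "k = j")
    case True
    have "\<omega> ^ j = 1" using assms by (simp add: \<omega>_def DeMoivre)
    moreover have "w ^ j = a / of_nat j" using groot[of j] assms by (simp add: w_def)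
    ultimately show ?thesis using eq True assms by simp
  next
    case False
    have ne: "\<omega> ^ k \<noteq> 1" using root_unity_ne1[of k j] assms False by (simp add: \<omega>_def)
    have "\<omega> ^ j = 1" using assms by (simp add: \<omega>_def DeMoivre)
    hence "(\<omega> ^ k) ^ j = 1" by (simp only: power_mult[symmetric] mult.commute) (simp add: power_mult)
    hence "(\<Sum>l<j. (\<omega> ^ k) ^ l) = 0" using geometric_sum[OF ne, of j] by simp
    thus ?thesis using eq False by simp
  qed
qed


fun FLr :: "(nat \<Rightarrow> complex) \<Rightarrow> nat \<Rightarrow> complex list" where
  "FLr T 0 = []"
| "FLr T (Suc K) = FLr T K @ gadget (Suc K) (T (Suc K) - psl (FLr T K) (Suc K))"

lemma FLr_psl: "1 \<le> k \<Longrightarrow> k \<le> K \<Longrightarrow> psl (FLr T K) k = T k"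
proof (induction K)
  case 0 thus ?case by simp
next
  case (Suc K)
  show ?case
  proof (cases "k = Suc K")
    case True
    thus ?thesis using psl_gadget[of k "Suc K"] Suc.prems by simp
  next
    case False
    hence "k \<le> K" using Suc.prems by simp
    thus ?thesis using psl_gadget[of k "Suc K"] Suc.prems Suc.IH False by simp
  qed
qed

lemma FLr_len: "2 * length (FLr T K) = K * (K + 1)"
  by (induction K) (auto simp: algebra_simps)

lemma psl_alg: "(\<And>z. z \<in> set L \<Longrightarrow> algebraic z) \<Longrightarrow> algebraic (psl L k)"
  unfolding psl_def by (rule alg_sum_list) (rule alg_power)

lemma FLr_alg: "(\<And>k. algebraic (T k)) \<Longrightarrow> z \<in> set (FLr T K) \<Longrightarrow> algebraic z"
proof (induction K arbitrary: z)
  case 0 thus ?case by simp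
next
  case (Suc K)
  have a: "algebraic (T (Suc K) - psl (FLr T K) (Suc K))"
    unfolding diff_conv_add_uminus
    by (intro alg_add algebraic_minus Suc.prems psl_alg Suc.IH) 
  show ?case using Suc.prems(2) Suc.IH[OF Suc.prems(1)] gadget_alg[OF a] by auto
qed

lemma nth_default_sum:
  assumes "length L \<le> m" "k \<ge> 1"
  shows "(\<Sum>l<m. nth_default 0 L l ^ k) = psl L k"
proof -
  have "(\<Sum>l<m. nth_default 0 L l ^ k) = (\<Sum>l\<in>{0..<length L}. nth_default 0 L l ^ k) + (\<Sum>l\<in>{length L..<m}. nth_default 0 L l ^ k)"
    using assms(1) by (simp add: lessThan_atLeast0 sum.atLeastLessThan_concat)
  also have "(\<Sum>l\<in>{length L..<m}. nth_default 0 L l ^ k) = 0"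
    using assms(2) by (intro sum.neutral) (auto simp: nth_default_def)
  also have "(\<Sum>l\<in>{0..<length L}. nth_default 0 L l ^ k) = (\<Sum>l\<in>{0..<length L}. L ! l ^ k)"
    by (intro sum.cong) (auto simp: nth_default_def)
  also have "\<dots> = psl L k"
    unfolding psl_def by (simp add: sum_list_sum_nth)
  finally show ?thesis by simp
qed

lemma verma_split:
  assumes "r + s < n" "length L \<le> n - r - s" "k \<ge> 1"
  shows "verma_cc n (\<lambda>i. if i \<le> r then B i else if n - s < i then C (n - i + 1)
                          else nth_default 0 L (i - r - 1)) k
         = (\<Sum>i=1..r. B i ^ k) + (\<Sum>j=1..s. C j ^ k) + psl L k"
proof -
  define \<mu> where "\<mu> = (\<lambda>i. if i \<le> r then B i else if n - s < i then C (n - i + 1)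
                          else nth_default 0 L (i - r - 1))"
  define m where "m = n - r - s"
  have n: "n = r + (m + s)" using assms(1) by (simp add: m_def)
  have "verma_cc n \<mu> k = (\<Sum>i=1..r + (m + s). \<mu> i ^ k)"
    unfolding verma_cc_def using n by simp
  also have "\<dots> = (\<Sum>i=1..r. \<mu> i ^ k) + (\<Sum>i=r+1..r + (m + s). \<mu> i ^ k)"
    by (rule sum.ub_add_nat) simp
  also have "(\<Sum>i=r+1..r + (m + s). \<mu> i ^ k) = (\<Sum>i=r+1..(r + m) + s. \<mu> i ^ k)"
    by (simp add: add.assoc)
  also have "\<dots> = (\<Sum>i=r+1..r + m. \<mu> i ^ k) + (\<Sum>i=r+m+1..(r + m) + s. \<mu> i ^ k)"
    by (rule sum.ub_add_nat) simp
  also have "(\<Sum>i=1..r. \<mu> i ^ k) = (\<Sum>i=1..r. B i ^ k)"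
    by (intro sum.cong) (auto simp: \<mu>_def)
  also have "(\<Sum>i=r+1..r + m. \<mu> i ^ k) = (\<Sum>l<m. nth_default 0 L l ^ k)"
    by (rule sum.reindex_bij_witness[where i="\<lambda>l. l + r + 1" and j="\<lambda>i. i - r - 1"])
       (auto simp: \<mu>_def n)
  also have "\<dots> = psl L k"
    using nth_default_sum assms(2,3) m_def by simp
  also have "(\<Sum>i=r+m+1..(r + m) + s. \<mu> i ^ k) = (\<Sum>j=1..s. C j ^ k)"
    by (rule sum.reindex_bij_witness[where i="\<lambda>j. n - j + 1" and j="\<lambda>i. n - i + 1"])
       (auto simp: \<mu>_def n)
  finally show ?thesis unfolding \<mu>_def by (simp add: algebra_simps)
qed


lemma ev_ge: assumes "nonprincipal_ultrafilter F" shows "eventually (\<lambda>n. N \<le> n) F"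
proof (induction N)
  case 0 thus ?case by simp
next
  case (Suc N)
  have "eventually (\<lambda>n. n \<noteq> N) F" using assms unfolding nonprincipal_ultrafilter_def by blast
  with Suc show ?case by eventually_elim auto
qed

theorem lemma8:
  fixes F :: "nat filter" and \<theta> :: "(nat \<Rightarrow> complex) \<Rightarrow> complex"
    and r s :: nat
    and b c :: "nat \<Rightarrow> nat \<Rightarrow> complex"
    and \<psi> :: "nat \<Rightarrow> complex"
  assumes iso: "ultraproduct_iso F \<theta>"
    and b_k: "\<forall>i\<in>{1..r}. \<forall>n. b i n \<in> kbar"
    and c_k: "\<forall>j\<in>{1..s}. \<forall>n. c j n \<in> kbar"
  shows "\<exists>\<Psi> :: nat \<Rightarrow> nat \<Rightarrow> complex.
           (\<forall>n. central_char_gl n (\<Psi> n)) \<and>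
           (\<forall>k\<ge>1. \<psi> k = \<theta> (\<lambda>n. \<Psi> n k)) \<and>
           (\<forall>n\<le>r+s. \<forall>k\<ge>1. \<Psi> n k = 0) \<and>
           (\<forall>n>r+s. \<exists>\<mu> :: nat \<Rightarrow> complex.
               (\<forall>i\<in>{1..n}. \<mu> i \<in> kbar) \<and>
               (\<forall>i\<in>{1..r}. \<mu> i = b i n) \<and>
               (\<forall>j\<in>{1..s}. \<mu> (n - j + 1) = c j n) \<and>
               (\<forall>k\<ge>1. \<Psi> n k = verma_cc n \<mu> k))"
proof -
  have NP: "nonprincipal_ultrafilter F" using iso unfolding ultraproduct_iso_def by blast
  have EQ: "\<And>x y. x \<in> kseqs \<Longrightarrow> y \<in> kseqs \<Longrightarrow> \<theta> x = \<theta> y \<longleftrightarrow> eventually (\<lambda>n. x n = y n) F"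
    using iso unfolding ultraproduct_iso_def by blast
  have SURJ: "\<And>z. \<exists>x\<in>kseqs. \<theta> x = z"
    using iso unfolding ultraproduct_iso_def by blast
  define Xs where "Xs k = (SOME x. x \<in> kseqs \<and> \<theta> x = \<psi> k)" for k
  have Xs: "Xs k \<in> kseqs \<and> \<theta> (Xs k) = \<psi> k" for k
  proof -
    have "\<exists>x. x \<in> kseqs \<and> \<theta> x = \<psi> k" using SURJ[of "\<psi> k"] by blast
    thus ?thesis unfolding Xs_def by (rule someI_ex)
  qed
  have Xalg: "algebraic (Xs k n)" for k n
    using Xs[of k] unfolding kseqs_def kbar_def by blast
  have balg: "algebraic (b i n)" if "i \<in> {1..r}" for i n
    using b_k that unfolding kbar_def by blast
  have calg: "algebraic (c j n)" if "j \<in> {1..s}" for j n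
    using c_k that unfolding kbar_def by blast
  define BC where "BC n k = (\<Sum>i=1..r. b i n ^ k) + (\<Sum>j=1..s. c j n ^ k)" for n k
  define T where "T n k = Xs k n - BC n k" for n k
  have Talg: "algebraic (T n k)" for n k
    unfolding T_def BC_def diff_conv_add_uminus
    by (intro alg_add algebraic_minus Xalg alg_sum alg_power balg calg) auto
  define KK where "KK n = (GREATEST K. K * (K + 1) \<le> 2 * (n - r - s))" for n
  have KK1: "KK n * (KK n + 1) \<le> 2 * (n - r - s)" for n
    unfolding KK_def by (rule GreatestI_nat[where k=0 and b="2 * (n - r - s)"]) (auto intro: order.trans[rotated])
  have KK2: "k \<le> KK n" if "k * (k + 1) \<le> 2 * (n - r - s)" for k n
    unfolding KK_def by (rule Greatest_le_nat[where b="2 * (n - r - s)"]) (use that in \<open>auto intro: order.trans[rotated]\<close>)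
  define FL where "FL n = FLr (T n) (KK n)" for n
  have FLlen: "length (FL n) \<le> n - r - s" for n
    using FLr_len[of "T n" "KK n"] KK1[of n] unfolding FL_def by linarith
  have FLalg: "z \<in> set (FL n) \<Longrightarrow> algebraic z" for z n
    unfolding FL_def by (rule FLr_alg[OF Talg])
  define M where "M n = (\<lambda>i. if i \<le> r then b i n else if n - s < i then c (n - i + 1) n
                          else nth_default 0 (FL n) (i - r - 1))" for n
  define \<Psi> where "\<Psi> n = verma_cc n (if n \<le> r + s then (\<lambda>_. 0) else M n)" for n
  have Malg: "M n i \<in> kbar" if "r + s < n" "i \<in> {1..n}" for n i
  proof -
    have "algebraic (M n i)"
    proof (cases "i \<le> r")
      case True thus ?thesis using that balg by (simp add: M_def)
    next
      case False
      show ?thesis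
      proof (cases "n - s < i")
        case True
        hence "n - i + 1 \<in> {1..s}" using that by auto
        thus ?thesis using False True calg by (simp add: M_def)
      next
        case False2: False
        have "algebraic (nth_default 0 (FL n) (i - r - 1))"
          by (auto simp: nth_default_def intro!: FLalg[of _ n])
        thus ?thesis using False False2 by (simp add: M_def)
      qed
    qed
    thus ?thesis by (simp add: kbar_def)
  qed
  have zero: "verma_cc n (\<lambda>_. 0) k = 0" if "k \<ge> 1" for n k
    using that by (simp add: verma_cc_def)
  have P1: "\<forall>n. central_char_gl n (\<Psi> n)"
  proof
    fix n
    show "central_char_gl n (\<Psi> n)"
    proof (cases "n \<le> r + s")
      case True
      thus ?thesis unfolding central_char_gl_def \<Psi>_def
        by (intro exI[of _ "\<lambda>_. 0"]) (auto simp: kbar_def)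
    next
      case False
      thus ?thesis unfolding central_char_gl_def \<Psi>_def
        using Malg[of n] by (intro exI[of _ "M n"]) auto
    qed
  qed
  have P3: "\<forall>n\<le>r+s. \<forall>k\<ge>1. \<Psi> n k = 0"
    by (auto simp: \<Psi>_def zero)
  have P4: "\<forall>n>r+s. \<exists>\<mu> :: nat \<Rightarrow> complex.
               (\<forall>i\<in>{1..n}. \<mu> i \<in> kbar) \<and>
               (\<forall>i\<in>{1..r}. \<mu> i = b i n) \<and>
               (\<forall>j\<in>{1..s}. \<mu> (n - j + 1) = c j n) \<and>
               (\<forall>k\<ge>1. \<Psi> n k = verma_cc n \<mu> k)"
  proof (intro allI impI)
    fix n assume n: "r + s < n"
    show "\<exists>\<mu> :: nat \<Rightarrow> complex.
               (\<forall>i\<in>{1..n}. \<mu> i \<in> kbar) \<and>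
               (\<forall>i\<in>{1..r}. \<mu> i = b i n) \<and>
               (\<forall>j\<in>{1..s}. \<mu> (n - j + 1) = c j n) \<and>
               (\<forall>k\<ge>1. \<Psi> n k = verma_cc n \<mu> k)"
    proof (intro exI[of _ "M n"] conjI ballI allI impI)
      fix i assume "i \<in> {1..n}" thus "M n i \<in> kbar" using Malg n by blast
    next
      fix i assume "i \<in> {1..r}" thus "M n i = b i n" by (simp add: M_def)
    next
      fix j assume "j \<in> {1..s}" thus "M n (n - j + 1) = c j n" using n by (auto simp: M_def)
    next
      fix k :: nat assume "1 \<le> k" thus "\<Psi> n k = verma_cc n (M n) k" using n by (simp add: \<Psi>_def)
    qed
  qed
  have P2: "\<forall>k\<ge>1. \<psi> k = \<theta> (\<lambda>n. \<Psi> n k)"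
  proof (intro allI impI)
    fix k :: nat assume k: "1 \<le> k"
    have inK: "(\<lambda>n. \<Psi> n k) \<in> kseqs"
      unfolding kseqs_def kbar_def
    proof (intro allI CollectI)
      fix n
      show "algebraic (\<Psi> n k)"
      proof (cases "n \<le> r + s")
        case True thus ?thesis using zero k by (simp add: \<Psi>_def)
      next
        case False
        thus ?thesis unfolding \<Psi>_def verma_cc_def
          using Malg[of n] by (intro alg_sum alg_power) (auto simp: kbar_def)
      qed
    qed
    have "eventually (\<lambda>n. r + s + k * (k + 1) + 1 \<le> n) F" by (rule ev_ge[OF NP])
    hence "eventually (\<lambda>n. \<Psi> n k = Xs k n) F"
    proof eventually_elim
      case (elim n)
      hence n: "r + s < n" and kk: "k * (k + 1) \<le> 2 * (n - r - s)" by auto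
      have kK: "k \<le> KK n" by (rule KK2[OF kk])
      have "\<Psi> n k = verma_cc n (M n) k" using n by (simp add: \<Psi>_def)
      also have "\<dots> = BC n k + psl (FL n) k"
        unfolding M_def BC_def by (rule verma_split[OF n FLlen k])
      also have "psl (FL n) k = T n k"
        unfolding FL_def using FLr_psl[OF k kK] .
      finally show ?case by (simp add: T_def)
    qed
    hence "\<theta> (\<lambda>n. \<Psi> n k) = \<theta> (Xs k)"
      using EQ[OF inK] Xs[of k] by blast
    thus "\<psi> k = \<theta> (\<lambda>n. \<Psi> n k)" using Xs[of k] by simp
  qed
  show ?thesis using P1 P2 P3 P4 by blast
qed

end
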